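(* For all integers $m$ and $n$, \[ \sum_{k = (1+(-1)^n)/2}^n ( - 1)^{k - 1} L_{mk}^{\,4} = \frac{( - 1)^{n - 1}\,5F_{mn} F_{mn + m} \left\{ L_m L_{mn} L_{mn + m} + ( - 1)^{nm}4L_{2m} \right\}}{L_m L_{2m}}\,. \] (Here the summation starts at $k=1$ if $n$ is even and at $k=0$ if $n$ is odd.)
   Context: $F_i$ and $L_i$ denote the Fibonacci and Lucas numbers, defined for all $i\in\mathbb{Z}$ by $F_i=F_{i-1}+F_{i-2}$, $F_0=0$, $F_1=1$, and $L_i=L_{i-1}+L_{i-2}$, $L_0=2$, $L_1=1$; equivalently $F_{-i}=(-1)^{i-1}F_i$ and $L_{-i}=(-1)^iL_i$. Summation convention for an arbitrary integer upper limit: $\sum_{k=a}^{a-1} f(k)=0$, and for $n<a-1$, $\sum_{k=a}^{n} f(k) = -\sum_{k=n+1}^{a-1} f(k)$. *)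

theory Defs
  imports Complex_Main
begin

fun fibn :: "nat \<Rightarrow> int" where
  "fibn 0 = 0" | "fibn (Suc 0) = 1" | "fibn (Suc (Suc n)) = fibn (Suc n) + fibn n"

fun lucn :: "nat \<Rightarrow> int" where
  "lucn 0 = 2" | "lucn (Suc 0) = 1" | "lucn (Suc (Suc n)) = lucn (Suc n) + lucn n"

definition F :: "int \<Rightarrow> int" where
  "F i = (if i \<ge> 0 then fibn (nat i) else (-1) ^ (nat (-i) + 1) * fibn (nat (-i)))"

definition L :: "int \<Rightarrow> int" where
  "L i = (if i \<ge> 0 then lucn (nat i) else (-1) ^ nat (-i) * lucn (nat (-i)))"

definition gsum :: "(int \<Rightarrow> 'b::ab_group_add) \<Rightarrow> int \<Rightarrow> int \<Rightarrow> 'b" where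
  "gsum f a n = (if n \<ge> a - 1 then (\<Sum>k\<in>{a..n}. f k) else - (\<Sum>k\<in>{n+1..a-1}. f k))"

end

theory Submission
  imports Defs
begin

lemma lucn_pos: "lucn n \<ge> 1"
proof (induction n rule: lucn.induct)
  case 1 show ?case by simp
next
  case 2 show ?case by simp
next
  case (3 n) then show ?case by simp
qed
lemma lucn_nz: "lucn n \<noteq> 0" using lucn_pos[of n] by linarith
lemma L_nz: "L i \<noteq> 0"
  unfolding L_def by (simp add: lucn_nz)

definition phi :: real where "phi = (1 + sqrt 5) / 2"
definition psi :: real where "psi = (1 - sqrt 5) / 2"

lemma s5: "sqrt 5 * sqrt 5 = (5::real)" by simp

lemma phipsi: "phi * psi = -1" "phi * phi = phi + 1" "psi * psi = psi + 1" "phi - psi = sqrt 5" "phi + psi = 1"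
  unfolding phi_def psi_def using s5 by (simp_all add: field_simps algebra_simps)

lemma phi_nz: "phi \<noteq> 0" "psi \<noteq> 0" using phipsi(1) by auto

lemma fib_binet: "real_of_int (fibn n) = (phi^n - psi^n) / sqrt 5"
proof (induction n rule: fibn.induct)
  case 1 then show ?case by simp
next
  case 2 then show ?case using phipsi(4) by simp
next
  case (3 n)
  have "phi^(Suc (Suc n)) = phi^n * (phi*phi)" by (simp add: algebra_simps)
  also have "\<dots> = phi^(Suc n) + phi^n" unfolding phipsi(2) phipsi(3) by (simp add: algebra_simps)
  finally have A: "phi^(Suc (Suc n)) = phi^(Suc n) + phi^n" .
  have "psi^(Suc (Suc n)) = psi^n * (psi*psi)" by (simp add: algebra_simps)
  also have "\<dots> = psi^(Suc n) + psi^n" unfolding phipsi(2) phipsi(3) by (simp add: algebra_simps)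
  finally have B: "psi^(Suc (Suc n)) = psi^(Suc n) + psi^n" .

  have "real_of_int (fibn (Suc (Suc n))) = real_of_int (fibn (Suc n)) + real_of_int (fibn n)" by simp
  also have "\<dots> = ((phi^Suc n - psi^Suc n) + (phi^n - psi^n)) / sqrt 5"
    using 3 by (simp only: add_divide_distrib)
  also have "(phi^Suc n - psi^Suc n) + (phi^n - psi^n) = phi ^ Suc (Suc n) - psi ^ Suc (Suc n)"
    unfolding A B by simp
  finally show ?case .
qed

lemma luc_binet: "real_of_int (lucn n) = phi^n + psi^n"
proof (induction n rule: lucn.induct)
  case 1 then show ?case by simp
next
  case 2 then show ?case by (simp only: power_Suc power_0 mult_1_right lucn.simps phipsi(5) of_int_1)
next
  case (3 n)
  have "phi^(Suc (Suc n)) = phi^n * (phi*phi)" by (simp add: algebra_simps)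
  also have "\<dots> = phi^(Suc n) + phi^n" unfolding phipsi(2) phipsi(3) by (simp add: algebra_simps)
  finally have A: "phi^(Suc (Suc n)) = phi^(Suc n) + phi^n" .
  have "psi^(Suc (Suc n)) = psi^n * (psi*psi)" by (simp add: algebra_simps)
  also have "\<dots> = psi^(Suc n) + psi^n" unfolding phipsi(2) phipsi(3) by (simp add: algebra_simps)
  finally have B: "psi^(Suc (Suc n)) = psi^(Suc n) + psi^n" .

  have "real_of_int (lucn (Suc (Suc n))) = real_of_int (lucn (Suc n)) + real_of_int (lucn n)" by simp
  also have "\<dots> = (phi^Suc n + psi^Suc n) + (phi^n + psi^n)"
    using 3 by (simp only:)
  also have "(phi^Suc n + psi^Suc n) + (phi^n + psi^n) = phi ^ Suc (Suc n) + psi ^ Suc (Suc n)"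
    unfolding A B by (simp only: ac_simps)
  finally show ?case .
qed

lemma inv_phi: "inverse phi = - psi" "inverse psi = - phi"
  by (rule inverse_unique, simp add: phipsi(1) mult.commute)+

lemma neg_pows: "phi powi (- int k) = (-1)^k * psi^k" "psi powi (- int k) = (-1)^k * phi^k"
proof -
  have "phi powi (- int k) = (inverse phi)^k" by (simp only: power_int_minus power_int_of_nat power_inverse)
  then show "phi powi (- int k) = (-1)^k * psi^k" unfolding inv_phi using power_minus by (rule trans)
  have "psi powi (- int k) = (inverse psi)^k" by (simp only: power_int_minus power_int_of_nat power_inverse)
  then show "psi powi (- int k) = (-1)^k * phi^k" unfolding inv_phi using power_minus by (rule trans)
qed

lemma F_binet: "real_of_int (F i) = (phi powi i - psi powi i) / sqrt 5"
proof (cases "i \<ge> 0")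
  case True
  then obtain k where k: "i = int k" using nonneg_int_cases by blast
  then show ?thesis by (simp add: F_def fib_binet)
next
  case False
  define k where "k = nat (-i)"
  have k: "i = - int k" using False unfolding k_def by simp
  have "real_of_int (F i) = (-1)^(k+1) * ((phi^k - psi^k) / sqrt 5)"
    using False unfolding F_def k_def by (simp add: fib_binet)
  also have "\<dots> = ((-1)^k * psi^k - (-1)^k * phi^k) / sqrt 5" by (simp add: algebra_simps diff_divide_distrib)
  also have "\<dots> = (phi powi i - psi powi i) / sqrt 5" unfolding k neg_pows ..
  finally show ?thesis .
qed

lemma L_binet: "real_of_int (L i) = phi powi i + psi powi i"
proof (cases "i \<ge> 0")
  case True
  then obtain k where k: "i = int k" using nonneg_int_cases by blast
  then show ?thesis by (simp add: L_def luc_binet)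
next
  case False
  define k where "k = nat (-i)"
  have k: "i = - int k" using False unfolding k_def by simp
  have "real_of_int (L i) = (-1)^k * (phi^k + psi^k)"
    using False unfolding L_def k_def by (simp add: luc_binet)
  also have "\<dots> = (-1)^k * psi^k + (-1)^k * phi^k" by (simp add: algebra_simps)
  also have "\<dots> = phi powi i + psi powi i" unfolding k neg_pows ..
  finally show ?thesis .
qed

lemma gsum_step: "gsum (f::int\<Rightarrow>real) a n - gsum f a (n - 1) = f n"
proof -
  consider "n \<ge> a" | "n = a - 1" | "n < a - 1" by linarith
  then show ?thesis
  proof cases
    case 1
    have "{a..n} = insert n {a..n-1}" using 1 by auto
    then have "sum f {a..n} = f n + sum f {a..n-1}" by simp
    then show ?thesis using 1 unfolding gsum_def by simp
  next
    case 2
    have "{a - 1..a - 1} = {a-1}" by simp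
    then show ?thesis using 2 unfolding gsum_def by simp
  next
    case 3
    have "{n..a-1} = insert n {n+1..a-1}" using 3 by auto
    then have "sum f {n..a-1} = f n + sum f {n+1..a-1}" by simp
    then show ?thesis using 3 unfolding gsum_def by simp
  qed
qed

lemma gsum_shift: "gsum (f::int\<Rightarrow>real) 0 n = gsum f 1 n + f 0"
proof (induction n rule: int_induct[where k = 0])
  case base
  then show ?case unfolding gsum_def by simp
next
  case (step1 i)
  have "gsum f 0 (i+1) = gsum f 0 i + f (i+1)" using gsum_step[of f 0 "i+1"] by simp
  moreover have "gsum f 1 (i+1) = gsum f 1 i + f (i+1)" using gsum_step[of f 1 "i+1"] by simp
  ultimately show ?case using step1 by simp
next
  case (step2 i)
  have "gsum f 0 (i-1) = gsum f 0 i - f i" using gsum_step[of f 0 i] by simp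
  moreover have "gsum f 1 (i-1) = gsum f 1 i - f i" using gsum_step[of f 1 i] by simp
  ultimately show ?case using step2 by simp
qed

lemma m1_powi: "(-1::real) powi n = (if even n then 1 else -1)"
proof (cases "n \<ge> 0")
  case True
  then obtain k where "n = int k" using nonneg_int_cases by blast
  then show ?thesis by (simp add: power_int_of_nat)
next
  case False
  define k where "k = nat (-n)"
  have k: "n = - int k" using False unfolding k_def by simp
  have "(-1::real) powi n = (-1) powi (int k)" unfolding k by (rule power_int_minus_one_minus)
  then show ?thesis unfolding k by (simp add: power_int_of_nat)
qed

lemma core0:
  fixes x y p q e t s :: real
  assumes "x*y = e" "p*q = t" "e = 1 \<or> e = -1" "t = 1 \<or> t = -1"
  shows "-s*(p-q)*(p*x-q*y)*((x+y)*(p+q)*(p*x+q*y)+4*t*(x^2+y^2)) - s*(p*y*e - q*x*e)*(p-q)*((x+y)*(p*y*e+q*x*e)*(p+q) + 4*t*e*(x^2+y^2)) = (-s*(p+q)^4+16*s)*(x+y)*(x^2+y^2)"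
  using assms by (elim disjE; simp; algebra)

definition Rf :: "int \<Rightarrow> int \<Rightarrow> real" where
  "Rf m n = (-1) powi (n - 1) * 5 * real_of_int (F (m * n)) * real_of_int (F (m * n + m))
             * (real_of_int (L m * L (m * n) * L (m * n + m))
                + (-1) powi (n * m) * 4 * real_of_int (L (2 * m)))
           / (real_of_int (L m) * real_of_int (L (2 * m)))"

lemma R_step: "Rf m n - Rf m (n - 1) = (-1) powi (n - 1) * (real_of_int (L (m * n)))^4 + 16 * (-1) powi n"
proof -
  define x where "x = phi powi m"
  define y where "y = psi powi m"
  define p where "p = phi powi (m*n)"
  define q where "q = psi powi (m*n)"
  define p' where "p' = phi powi (m*(n-1))"
  define q' where "q' = psi powi (m*(n-1))"
  define e :: real where "e = (-1) powi m"
  define t :: real where "t = (-1) powi (m*n)"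
  define s :: real where "s = (-1) powi n"
  have e1: "e = 1 \<or> e = -1" unfolding e_def m1_powi by simp
  have t1: "t = 1 \<or> t = -1" unfolding t_def m1_powi by simp
  have ee: "e * e = 1" using e1 by auto
  have xy: "x * y = e" unfolding x_def y_def e_def power_int_mult_distrib[symmetric] phipsi(1) ..
  have pq: "p * q = t" unfolding p_def q_def t_def power_int_mult_distrib[symmetric] phipsi(1) ..
  have px: "phi powi (m*n+m) = p * x" unfolding p_def x_def using phi_nz by (simp add: power_int_add)
  have qy: "psi powi (m*n+m) = q * y" unfolding q_def y_def using phi_nz by (simp add: power_int_add)
  have p'x: "p' * x = p" unfolding p'_def x_def p_def using phi_nz by (simp add: power_int_add[symmetric] algebra_simps)
  have q'y: "q' * y = q" unfolding q'_def y_def q_def using phi_nz by (simp add: power_int_add[symmetric] algebra_simps)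
  have p'e: "p' = p*y*e"
  proof -
    have "p' = p' * ((x*y)*e)" unfolding xy ee by simp
    also have "\<dots> = p' * x * y * e" by (simp only: mult.assoc)
    also have "\<dots> = p*y*e" unfolding p'x ..
    finally show ?thesis .
  qed
  have q'e: "q' = q*x*e"
  proof -
    have "q' = q' * ((y*x)*e)" unfolding mult.commute[of y x] xy ee by simp
    also have "\<dots> = q' * y * x * e" by (simp only: mult.assoc)
    also have "\<dots> = q*x*e" unfolding q'y ..
    finally show ?thesis .
  qed
  have x2: "phi powi (2*m) = x^2" unfolding x_def mult_2 power2_eq_square using phi_nz(1)
    by (intro power_int_add) simp
  have y2: "psi powi (2*m) = y^2" unfolding y_def mult_2 power2_eq_square using phi_nz(2)
    by (intro power_int_add) simp
  have Lm: "real_of_int (L m) = x + y" unfolding L_binet x_def y_def ..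
  have Lmn: "real_of_int (L (m*n)) = p + q" unfolding L_binet p_def q_def ..
  have Lmn1: "real_of_int (L (m*n+m)) = p*x + q*y" unfolding L_binet px qy ..
  have L2m: "real_of_int (L (2*m)) = x^2 + y^2" unfolding L_binet x2 y2 ..
  have Lmn': "real_of_int (L (m*(n-1))) = p' + q'" unfolding L_binet p'_def q'_def ..
  have FF1: "5 * real_of_int (F (m*n)) * real_of_int (F (m*n+m)) = (p-q)*(p*x-q*y)"
    unfolding F_binet px qy p_def[symmetric] q_def[symmetric] using s5 by (simp add: field_simps)
  have FF2: "5 * real_of_int (F (m*(n-1))) * real_of_int (F (m*(n-1)+m)) = (p'-q')*(p-q)"
  proof -
    have "m*(n-1)+m = m*n" by (simp add: algebra_simps)
    then show ?thesis
    unfolding \<open>m*(n-1)+m = m*n\<close> F_binet p_def[symmetric] q_def[symmetric] p'_def[symmetric] q'_def[symmetric] using s5 by (simp add: field_simps)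
  qed
  have s1: "(-1::real) powi (n - 1) = - s" unfolding s_def m1_powi by simp
  have s2: "(-1::real) powi (n - 1 - 1) = s" unfolding s_def m1_powi by simp
  have tn: "(-1::real) powi (n * m) = t" unfolding t_def by (simp add: mult.commute)
  have tn': "(-1::real) powi ((n - 1) * m) = t * e"
  proof -
    have "(-1::real) powi ((n - 1) * m) * e = t" unfolding e_def t_def
      by (simp add: power_int_add[symmetric] algebra_simps)
    then have "(-1::real) powi ((n - 1) * m) * e * e = t * e" by simp
    then show ?thesis using ee by (simp add: mult.assoc)
  qed
  have D: "(x+y)*(x^2+y^2) \<noteq> 0" using L_nz[of m] L_nz[of "2*m"] Lm L2m by (metis of_int_eq_0_iff mult_eq_0_iff)
  have FF1': "a * 5 * real_of_int (F (m*n)) * real_of_int (F (m*n+m)) = a * ((p-q)*(p*x-q*y))" for a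
    using FF1 by (metis mult.assoc)
  have mm: "m*(n-1)+m = m*n" by (simp add: algebra_simps)
  have FF2': "a * 5 * real_of_int (F (m*(n-1))) * real_of_int (F (m*n)) = a * ((p'-q')*(p-q))" for a
    using FF2 unfolding mm by (metis mult.assoc)
  have R1: "Rf m n = -s*((p-q)*(p*x-q*y))*((x+y)*(p+q)*(p*x+q*y)+t*4*(x^2+y^2)) / ((x+y)*(x^2+y^2))"
    unfolding Rf_def of_int_mult s1 tn Lm Lmn Lmn1 L2m FF1' ..
  have R2: "Rf m (n-1) = s*((p'-q')*(p-q))*((x+y)*(p'+q')*(p+q)+(t*e)*4*(x^2+y^2)) / ((x+y)*(x^2+y^2))"
    unfolding Rf_def of_int_mult mm s2 tn' Lm Lmn' Lmn L2m FF2' ..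
  have R1': "Rf m n = -s*(p-q)*(p*x-q*y)*((x+y)*(p+q)*(p*x+q*y)+4*t*(x^2+y^2)) / ((x+y)*(x^2+y^2))"
    unfolding R1 by (simp only: mult.assoc mult.commute[of t 4])
  have R2': "Rf m (n-1) = s*(p'-q')*(p-q)*((x+y)*(p'+q')*(p+q)+4*(t*e)*(x^2+y^2)) / ((x+y)*(x^2+y^2))"
    unfolding R2 by (simp only: mult_ac)
  have "Rf m n - Rf m (n - 1) = (-s*(p-q)*(p*x-q*y)*((x+y)*(p+q)*(p*x+q*y)+4*t*(x^2+y^2)) - s*(p*y*e - q*x*e)*(p-q)*((x+y)*(p*y*e+q*x*e)*(p+q) + 4*t*e*(x^2+y^2))) / ((x+y)*(x^2+y^2))"
    unfolding R1' R2' p'e q'e by (simp add: diff_divide_distrib)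
  also have "\<dots> = (-s*(p+q)^4+16*s)*(x+y)*(x^2+y^2) / ((x+y)*(x^2+y^2))"
    unfolding core0[OF xy pq e1 t1] ..
  also have "\<dots> = -s*(p+q)^4+16*s" using D by (simp add: mult.assoc)
  finally show ?thesis unfolding s1 Lmn s_def by simp
qed

lemma S_eq: "gsum (f::int\<Rightarrow>real) (if even n then 1 else 0) n = gsum f 1 n + (if even n then 0 else f 0)"
  using gsum_shift[of f n] by simp

lemma S_step:
  fixes m :: int
  defines "f \<equiv> (\<lambda>k. (-1) powi (k - 1) * (real_of_int (L (m * k)))^4)"
  shows "gsum f (if even n then 1 else 0) n - gsum f (if even (n-1) then 1 else 0) (n-1)
         = f n + 16 * (-1) powi n"
proof -
  have f0: "f 0 = -16" unfolding f_def by (simp add: L_def)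
  have "gsum f (if even n then 1 else 0) n - gsum f (if even (n-1) then 1 else 0) (n-1)
      = (gsum f 1 n - gsum f 1 (n-1)) + ((if even n then 0 else f 0) - (if even (n-1) then 0 else f 0))"
    unfolding S_eq by simp
  also have "\<dots> = f n + 16 * (-1) powi n" unfolding gsum_step f0 m1_powi by simp
  finally show ?thesis .
qed

theorem theorem4:
  fixes m n :: int
  shows "gsum (\<lambda>k. (-1) powi (k - 1) * (real_of_int (L (m * k)))^4)
               (if even n then 1 else 0) n
         = (-1) powi (n - 1) * 5 * real_of_int (F (m * n)) * real_of_int (F (m * n + m))
             * (real_of_int (L m * L (m * n) * L (m * n + m))
                + (-1) powi (n * m) * 4 * real_of_int (L (2 * m)))
           / (real_of_int (L m) * real_of_int (L (2 * m)))"
proof -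
  define f where "f = (\<lambda>k. (-1) powi (k - 1) * (real_of_int (L (m * k)))^4)"
  have "gsum f (if even n then 1 else 0) n = Rf m n"
  proof (induction n rule: int_induct[where k = 0])
    case base
    show ?case unfolding Rf_def gsum_def by (simp add: F_def)
  next
    case (step1 i)
    have a: "gsum f (if even (i+1) then 1 else 0) (i+1) - gsum f (if even i then 1 else 0) i
         = f (i+1) + 16 * (-1) powi (i+1)" using S_step[of m "i+1"] unfolding f_def by simp
    have b: "Rf m (i+1) - Rf m i = f (i+1) + 16 * (-1) powi (i+1)"
      using R_step[of m "i+1"] unfolding f_def by simp
    show ?case using a b step1 by linarith
  next
    case (step2 i)
    have a: "gsum f (if even i then 1 else 0) i - gsum f (if even (i-1) then 1 else 0) (i-1)
         = f i + 16 * (-1) powi i" using S_step[of m i] unfolding f_def by simp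
    have b: "Rf m i - Rf m (i-1) = f i + 16 * (-1) powi i"
      using R_step[of m i] unfolding f_def by simp
    show ?case using a b step2 by linarith
  qed
  then show ?thesis unfolding f_def Rf_def .
qed

end
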